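(* Consider the multi-element (three spatial elements, periodic), single-slab space-time SBP scheme $$\mathsf D_t\boldsymbol\rho+\tilde{\mathsf D}_x\langle v\boldsymbol g\rangle=-\sigma_a\boldsymbol\rho-\mathsf H_t^{-1}\mathsf t_B\mathsf t_B^\top(\boldsymbol\rho-\boldsymbol\rho(0)),$$ $$\mathsf D_t\boldsymbol g_k+\tfrac{v_k}{\varepsilon}\tilde{\mathsf D}_x\boldsymbol g_k-\tfrac1\varepsilon\langle v\tilde{\mathsf D}_x\boldsymbol g\rangle+\tfrac{v_k}{\varepsilon^2}\tilde{\mathsf D}_x\boldsymbol\rho=-\Big(\tfrac{\sigma_s}{\varepsilon^2}+\sigma_a\Big)\boldsymbol g_k-\mathsf H_t^{-1}\mathsf t_B\mathsf t_B^\top(\boldsymbol g_k-\boldsymbol g_k(0)),\quad k=1,\dots,n_v.$$ This scheme is asymptotic preserving: for fixed discretization, in the formal limit $\varepsilon\to0$ (assuming the discrete derivative approximations remain bounded) it reduces to $\mathsf D_t\boldsymbol\rho=\tilde{\mathsf D}_x\big(\tfrac{\langle v^2\rangle}{\sigma_s}\tilde{\mathsf D}_x\boldsymbol\rho\big)-\sigma_a\boldsymbol\rho-\mathsf H_t^{-1}\mathsf t_B\mathsf t_B^\top(\boldsymbol\rho-\boldsymbol\rho(0))$, a consistent and stable discretization of $\partial_t\rho=\langle v^2\rangle\partial_x\big(\tfrac1{\sigma_s}\partial_x\rho\big)-\sigma_a\rho$.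
   Context: SBP operators: $\bar{\mathsf D}=\bar{\mathsf H}^{-1}\bar{\mathsf Q}$ on nodes $x_0<\dots<x_n$ is a degree-$p$ SBP approximation of $d/dx$ if it differentiates monomials of degree $\le p$ exactly, $\bar{\mathsf H}$ is diagonal symmetric positive definite, and $\bar{\mathsf Q}+\bar{\mathsf Q}^\top=\bar{\mathsf E}=\bar{\boldsymbol t}_R\bar{\boldsymbol t}_R^\top-\bar{\boldsymbol t}_L\bar{\boldsymbol t}_L^\top=\mathrm{diag}(-1,0,\dots,0,1)$, $\bar{\boldsymbol t}_L,\bar{\boldsymbol t}_R$ first/last unit vectors. $\bar{\mathsf D}_x=\bar{\mathsf H}_x^{-1}\bar{\mathsf Q}_x$ on $n_x+1$ spatial nodes per element, $\bar{\mathsf S}_x=\bar{\mathsf Q}_x-\frac12\bar{\mathsf E}_x$; $\bar{\mathsf D}_t=\bar{\mathsf H}_t^{-1}\bar{\mathsf Q}_t$ on $n_t+1$ temporal nodes with first/last unit vectors $\bar{\boldsymbol t}_B,\bar{\boldsymbol t}_T$. $\tilde{\bar{\mathsf D}}^G_x=(\mathsf I_3\otimes\bar{\mathsf H}_x^{-1})\tilde{\bar{\mathsf Q}}^G_x$, with $\tilde{\bar{\mathsf Q}}^G_x$ the $3\times3$ block matrix having diagonal blocks $\bar{\mathsf S}_x$, blocks $(1,2),(2,3),(3,1)$ equal to $\frac12\bar{\boldsymbol t}_R\bar{\boldsymbol t}_L^\top$, blocks $(2,1),(3,2),(1,3)$ equal to $-\frac12\bar{\boldsymbol t}_L\bar{\boldsymbol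 t}_R^\top$. $\tilde{\mathsf D}_x=\mathsf I_{n_t}\otimes\tilde{\bar{\mathsf D}}^G_x$, $\mathsf D_t=\bar{\mathsf D}_t\otimes\mathsf I_3\otimes\mathsf I_{n_x}$, $\mathsf H_t=\bar{\mathsf H}_t\otimes\mathsf I_3\otimes\mathsf I_{n_x}$, $\mathsf t_B=\bar{\boldsymbol t}_B\otimes\mathsf I_3\otimes\mathsf I_{n_x}$ ($\mathsf I_{n_x},\mathsf I_{n_t}$ identities of sizes $n_x+1,n_t+1$). Velocity nodes $v_k$, weights $\omega_k$ with $\sum\omega_k=1$, $\sum\omega_kv_k=0$; $\langle\boldsymbol a\rangle=\sum\omega_k\boldsymbol a_k$, $\langle v^2\rangle=\sum\omega_kv_k^2$. $\varepsilon>0$, $\sigma_s>0$, $\sigma_a\ge0$. A scheme is asymptotic preserving if, for fixed discretization parameters, in the limit $\varepsilon\to0$ it becomes a consistent (and stable) discretization of the macroscopic limit equation; stability of the limit scheme means the final-time discrete energy is bounded by initial-data terms. *)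

theory Defs
  imports "HOL-Analysis.Analysis"
begin

text \<open>Square matrices of size (n+1) x (n+1) are represented as functions
  on indices 0..n.  Grid functions on the space-time slab are indexed by
  (time node i in 0..nt, element e in 0..2, spatial node j in 0..nx);
  this is the index ordering of the Kronecker products
  (time) x (I_3) x (I_nx) used in the paper.\<close>

type_synonym rmat = "nat \<Rightarrow> nat \<Rightarrow> real"
type_synonym grid = "nat \<Rightarrow> nat \<Rightarrow> nat \<Rightarrow> real"
type_synonym svec = "nat \<Rightarrow> nat \<Rightarrow> real"

text \<open>Boundary matrix E = t_R t_R^T - t_L t_L^T = diag(-1,0,...,0,1).\<close>
definition bdry_E :: "nat \<Rightarrow> rmat" where
  "bdry_E n i j = (if i = j \<and> i = n then 1 else 0) - (if i = j \<and> i = 0 then 1 else 0)"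

text \<open>D = H^{-1} Q for diagonal H.\<close>
definition sbp_D :: "rmat \<Rightarrow> rmat \<Rightarrow> rmat" where
  "sbp_D H Q i j = Q i j / H i i"

definition is_sbp :: "nat \<Rightarrow> nat \<Rightarrow> (nat \<Rightarrow> real) \<Rightarrow> rmat \<Rightarrow> rmat \<Rightarrow> bool" where
  "is_sbp n p x H Q \<longleftrightarrow>
     (\<forall>i<n. x i < x (Suc i)) \<and>
     (\<forall>i\<le>n. \<forall>j\<le>n. H i j = H j i) \<and>
     (\<forall>i\<le>n. \<forall>j\<le>n. i \<noteq> j \<longrightarrow> H i j = 0) \<and>
     (\<forall>i\<le>n. 0 < H i i) \<and>
     (\<forall>i\<le>n. \<forall>j\<le>n. Q i j + Q j i = bdry_E n i j) \<and>
     (\<forall>k\<le>p. \<forall>i\<le>n. (\<Sum>j\<le>n. sbp_D H Q i j * x j ^ k) = of_nat k * x i ^ (k - 1))"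

definition sbp_S :: "nat \<Rightarrow> rmat \<Rightarrow> rmat" where
  "sbp_S n Q i j = Q i j - bdry_E n i j / 2"

text \<open>The 3x3 block matrix tilde Q^G_x: entry (block e, row j ; block e', column l).
  Diagonal blocks S_x; blocks (1,2),(2,3),(3,1) = t_R t_L^T / 2;
  blocks (2,1),(3,2),(1,3) = - t_L t_R^T / 2 (blocks numbered 0,1,2 here).\<close>
definition QG :: "nat \<Rightarrow> rmat \<Rightarrow> nat \<Rightarrow> nat \<Rightarrow> nat \<Rightarrow> nat \<Rightarrow> real" where
  "QG nx Qx e j e' l =
     (if e' = e then sbp_S nx Qx j l else 0)
   + (if e' = (e + 1) mod 3 then (if j = nx \<and> l = 0 then 1/2 else 0) else 0)
   - (if e' = (e + 2) mod 3 then (if j = 0 \<and> l = nx then 1/2 else 0) else 0)"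

text \<open>tilde D_x = I_{n_t} (x) (I_3 (x) H_x^{-1}) tilde Q^G_x, applied to a grid function.\<close>
definition Dx_tilde :: "nat \<Rightarrow> rmat \<Rightarrow> rmat \<Rightarrow> grid \<Rightarrow> grid" where
  "Dx_tilde nx Hx Qx u i e j =
     (\<Sum>e'<3. \<Sum>l\<le>nx. QG nx Qx e j e' l * u i e' l) / Hx j j"

text \<open>D_t = bar D_t (x) I_3 (x) I_nx.\<close>
definition Dt_op :: "nat \<Rightarrow> rmat \<Rightarrow> rmat \<Rightarrow> grid \<Rightarrow> grid" where
  "Dt_op nt Ht Qt u i e j = (\<Sum>l\<le>nt. sbp_D Ht Qt i l * u l e j)"

text \<open>H_t^{-1} t_B t_B^T (u - u(0)), with u(0) the initial data (a spatial vector).\<close>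
definition SAT :: "rmat \<Rightarrow> grid \<Rightarrow> svec \<Rightarrow> grid" where
  "SAT Ht u u0 i e j = (if i = 0 then (u 0 e j - u0 e j) / Ht 0 0 else 0)"

definition kinetic_scheme ::
  "nat \<Rightarrow> nat \<Rightarrow> rmat \<Rightarrow> rmat \<Rightarrow> rmat \<Rightarrow> rmat \<Rightarrow> nat \<Rightarrow> (nat \<Rightarrow> real) \<Rightarrow> (nat \<Rightarrow> real)
   \<Rightarrow> real \<Rightarrow> real \<Rightarrow> real \<Rightarrow> grid \<Rightarrow> (nat \<Rightarrow> grid) \<Rightarrow> svec \<Rightarrow> (nat \<Rightarrow> svec) \<Rightarrow> bool" where
  "kinetic_scheme nt nx Ht Qt Hx Qx nv v \<omega> \<sigma>s \<sigma>a \<epsilon> \<rho> g \<rho>0 g0 \<longleftrightarrow>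
    (\<forall>i\<le>nt. \<forall>e<3. \<forall>j\<le>nx.
      Dt_op nt Ht Qt \<rho> i e j
        + Dx_tilde nx Hx Qx (\<lambda>i' e' j'. \<Sum>k<nv. \<omega> k * v k * g k i' e' j') i e j
      = - \<sigma>a * \<rho> i e j - SAT Ht \<rho> \<rho>0 i e j
     \<and> (\<forall>k<nv.
      Dt_op nt Ht Qt (g k) i e j
        + v k / \<epsilon> * Dx_tilde nx Hx Qx (g k) i e j
        - 1 / \<epsilon> * (\<Sum>k'<nv. \<omega> k' * v k' * Dx_tilde nx Hx Qx (g k') i e j)
        + v k / \<epsilon>\<^sup>2 * Dx_tilde nx Hx Qx \<rho> i e j
      = - (\<sigma>s / \<epsilon>\<^sup>2 + \<sigma>a) * g k i e j - SAT Ht (g k) (g0 k) i e j))"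

definition limit_scheme ::
  "nat \<Rightarrow> nat \<Rightarrow> rmat \<Rightarrow> rmat \<Rightarrow> rmat \<Rightarrow> rmat \<Rightarrow> nat \<Rightarrow> (nat \<Rightarrow> real) \<Rightarrow> (nat \<Rightarrow> real)
   \<Rightarrow> real \<Rightarrow> real \<Rightarrow> grid \<Rightarrow> svec \<Rightarrow> bool" where
  "limit_scheme nt nx Ht Qt Hx Qx nv v \<omega> \<sigma>s \<sigma>a \<rho> \<rho>0 \<longleftrightarrow>
    (\<forall>i\<le>nt. \<forall>e<3. \<forall>j\<le>nx.
      Dt_op nt Ht Qt \<rho> i e j
      = Dx_tilde nx Hx Qx (\<lambda>i' e' j'. (\<Sum>k<nv. \<omega> k * v k ^ 2) / \<sigma>s
                                        * Dx_tilde nx Hx Qx \<rho> i' e' j') i e j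
        - \<sigma>a * \<rho> i e j - SAT Ht \<rho> \<rho>0 i e j)"

definition senergy :: "nat \<Rightarrow> rmat \<Rightarrow> svec \<Rightarrow> real" where
  "senergy nx Hx w = (\<Sum>e<3. \<Sum>j\<le>nx. Hx j j * (w e j)\<^sup>2)"

definition epoly :: "nat \<Rightarrow> nat \<Rightarrow> (nat \<Rightarrow> nat \<Rightarrow> nat \<Rightarrow> real) \<Rightarrow> nat \<Rightarrow> real \<Rightarrow> real \<Rightarrow> real" where
  "epoly pt px a e s y = (\<Sum>ii\<le>pt. \<Sum>jj\<le>px. a e ii jj * s ^ ii * y ^ jj)"

end

theory Submission
  imports Defs "HOL-Computational_Algebra.Polynomial"
begin


lemma Dt_tendsto:
  assumes "\<forall>l\<le>nt. ((\<lambda>\<epsilon>. u \<epsilon> l e j) \<longlongrightarrow> U l e j) F"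
  shows "((\<lambda>\<epsilon>. Dt_op nt Ht Qt (u \<epsilon>) i e j) \<longlongrightarrow> Dt_op nt Ht Qt U i e j) F"
  unfolding Dt_op_def using assms by (auto intro!: tendsto_intros)

lemma Dx_tendsto:
  assumes "\<forall>e'<3. \<forall>l\<le>nx. ((\<lambda>\<epsilon>. u \<epsilon> i e' l) \<longlongrightarrow> U i e' l) F"
  shows "((\<lambda>\<epsilon>. Dx_tilde nx Hx Qx (u \<epsilon>) i e j) \<longlongrightarrow> Dx_tilde nx Hx Qx U i e j) F"
  unfolding Dx_tilde_def divide_inverse using assms by (auto intro!: tendsto_intros)

lemma SAT_tendsto:
  assumes "\<forall>e<3. \<forall>j\<le>nx. ((\<lambda>\<epsilon>. u \<epsilon> 0 e j) \<longlongrightarrow> U 0 e j) F" "e < 3" "j \<le> nx"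
  shows "((\<lambda>\<epsilon>. SAT Ht (u \<epsilon>) u0 i e j) \<longlongrightarrow> SAT Ht U u0 i e j) F"
  unfolding SAT_def divide_inverse using assms by (auto intro!: tendsto_intros)

lemma SAT_scaled:
  assumes "((\<lambda>\<epsilon>. \<epsilon> * u \<epsilon> 0 e j) \<longlongrightarrow> 0) (at_right 0)"
  shows "((\<lambda>\<epsilon>. \<epsilon> * SAT Ht (u \<epsilon>) u0 i e j) \<longlongrightarrow> 0) (at_right (0::real))"
proof (cases "i = 0")
  case True
  have i: "((\<lambda>\<epsilon>::real. \<epsilon>) \<longlongrightarrow> 0) (at_right 0)" by (rule tendsto_ident_at)
  have "((\<lambda>\<epsilon>. (\<epsilon> * u \<epsilon> 0 e j - \<epsilon> * u0 e j) * inverse (Ht 0 0)) \<longlongrightarrow>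
     (0 - 0 * u0 e j) * inverse (Ht 0 0)) (at_right 0)"
    by (intro tendsto_intros assms i)
  then show ?thesis unfolding SAT_def using True by (simp add: divide_inverse algebra_simps)
next
  case False
  then show ?thesis unfolding SAT_def by simp
qed

lemma Dt_scale: "c * Dt_op nt Ht Qt u i e j = Dt_op nt Ht Qt (\<lambda>i e j. c * u i e j) i e j"
  unfolding Dt_op_def by (simp add: sum_distrib_left algebra_simps)

lemma Dx_scale: "c * Dx_tilde nx Hx Qx u i e j = Dx_tilde nx Hx Qx (\<lambda>i e j. c * u i e j) i e j"
  unfolding Dx_tilde_def by (simp add: sum_distrib_left algebra_simps)

lemma Dx_neg: "Dx_tilde nx Hx Qx (\<lambda>i e j. - u i e j) i e j = - Dx_tilde nx Hx Qx u i e j"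
  unfolding Dx_tilde_def by (simp add: sum_negf)

lemma Dt_zero: "Dt_op nt Ht Qt (\<lambda>i e j. 0) i e j = 0"
  unfolding Dt_op_def by simp
lemma Dx_zero: "Dx_tilde nx Hx Qx (\<lambda>i e j. 0) i e j = 0"
  unfolding Dx_tilde_def by simp

lemma alg1:
  fixes \<epsilon> \<sigma>s \<sigma>a v A Bx S Dr g Sat :: real
  assumes "\<epsilon> > 0" "\<sigma>s > 0"
    "A + v / \<epsilon> * Bx - 1 / \<epsilon> * S + v / \<epsilon>\<^sup>2 * Dr = - (\<sigma>s / \<epsilon>\<^sup>2 + \<sigma>a) * g - Sat"
  shows "g = (- v * Dr - \<epsilon> * (\<epsilon> * A) - v * (\<epsilon> * Bx) + \<epsilon> * S - \<epsilon> * \<sigma>a * (\<epsilon> * g) - \<epsilon> * (\<epsilon> * Sat)) / \<sigma>s"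
proof -
  have l: "\<epsilon>\<^sup>2 * (A + v / \<epsilon> * Bx - 1 / \<epsilon> * S + v / \<epsilon>\<^sup>2 * Dr) = \<epsilon>\<^sup>2 * A + \<epsilon> * v * Bx - \<epsilon> * S + v * Dr"
    using assms(1) by (simp add: field_simps power2_eq_square)
  have r: "\<epsilon>\<^sup>2 * (- (\<sigma>s / \<epsilon>\<^sup>2 + \<sigma>a) * g - Sat) = - (\<sigma>s + \<epsilon>\<^sup>2 * \<sigma>a) * g - \<epsilon>\<^sup>2 * Sat"
    using assms(1) by (simp add: field_simps power2_eq_square)
  from assms(3) have "\<epsilon>\<^sup>2 * A + \<epsilon> * v * Bx - \<epsilon> * S + v * Dr = - (\<sigma>s + \<epsilon>\<^sup>2 * \<sigma>a) * g - \<epsilon>\<^sup>2 * Sat"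
    using l r by metis
  then show ?thesis using assms(2) by (simp add: field_simps power2_eq_square)
qed



lemma part1:
  fixes \<rho> :: "real \<Rightarrow> grid" and g :: "real \<Rightarrow> nat \<Rightarrow> grid"
  assumes sig_s: "0 < \<sigma>s"
    and ev: "\<forall>\<^sub>F \<epsilon> in at_right 0. kinetic_scheme nt nx Ht Qt Hx Qx nv v \<omega> \<sigma>s \<sigma>a \<epsilon> (\<rho> \<epsilon>) (g \<epsilon>) \<rho>0 g0"
    and lim: "\<forall>i\<le>nt. \<forall>e<3. \<forall>j\<le>nx. ((\<lambda>\<epsilon>. \<rho> \<epsilon> i e j) \<longlongrightarrow> \<rho>lim i e j) (at_right 0)"
    and bd: "\<exists>B. \<forall>\<^sub>F \<epsilon> in at_right 0. \<forall>k<nv. \<forall>i\<le>nt. \<forall>e<3. \<forall>j\<le>nx. \<bar>g \<epsilon> k i e j\<bar> \<le> B"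
  shows "limit_scheme nt nx Ht Qt Hx Qx nv v \<omega> \<sigma>s \<sigma>a \<rho>lim \<rho>0"
proof -
  obtain B where B: "\<forall>\<^sub>F \<epsilon> in at_right 0. \<forall>k<nv. \<forall>i\<le>nt. \<forall>e<3. \<forall>j\<le>nx. \<bar>g \<epsilon> k i e j\<bar> \<le> B"
    using bd by blast
  have id0: "((\<lambda>\<epsilon>::real. \<epsilon>) \<longlongrightarrow> 0) (at_right 0)" by (rule tendsto_ident_at)
  have pos: "\<forall>\<^sub>F \<epsilon> in at_right 0. (0::real) < \<epsilon>" by (rule eventually_at_right_less)
  have hz: "((\<lambda>\<epsilon>. \<epsilon> * g \<epsilon> k i e j) \<longlongrightarrow> 0) (at_right 0)"
    if "k < nv" "i \<le> nt" "e < 3" "j \<le> nx" for k i e j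
  proof (rule Lim_null_comparison)
    show "\<forall>\<^sub>F \<epsilon> in at_right 0. norm (\<epsilon> * g \<epsilon> k i e j) \<le> \<epsilon> * B"
      using B pos
    proof eventually_elim
      case (elim \<epsilon>)
      then have "\<bar>g \<epsilon> k i e j\<bar> \<le> B" using that by blast
      then show ?case using elim(2) by (simp add: abs_mult mult_left_mono)
    qed
    show "((\<lambda>\<epsilon>. \<epsilon> * B) \<longlongrightarrow> 0) (at_right 0)"
      using tendsto_mult_left_zero[OF id0] by simp
  qed
  define G where "G k i e j = - (v k / \<sigma>s) * Dx_tilde nx Hx Qx \<rho>lim i e j" for k i e j
  have gl: "((\<lambda>\<epsilon>. g \<epsilon> k i e j) \<longlongrightarrow> G k i e j) (at_right 0)"
    if k: "k < nv" and i: "i \<le> nt" and e: "e < 3" and j: "j \<le> nx" for k i e j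
  proof -
    define R where "R \<epsilon> = (- v k * Dx_tilde nx Hx Qx (\<rho> \<epsilon>) i e j
        - \<epsilon> * Dt_op nt Ht Qt (\<lambda>i e j. \<epsilon> * g \<epsilon> k i e j) i e j
        - v k * Dx_tilde nx Hx Qx (\<lambda>i e j. \<epsilon> * g \<epsilon> k i e j) i e j
        + (\<Sum>k'<nv. \<omega> k' * v k' * Dx_tilde nx Hx Qx (\<lambda>i e j. \<epsilon> * g \<epsilon> k' i e j) i e j)
        - \<epsilon> * \<sigma>a * (\<epsilon> * g \<epsilon> k i e j) - \<epsilon> * (\<epsilon> * SAT Ht (g \<epsilon> k) (g0 k) i e j)) / \<sigma>s" for \<epsilon>
    have t1: "((\<lambda>\<epsilon>. Dx_tilde nx Hx Qx (\<rho> \<epsilon>) i e j) \<longlongrightarrow> Dx_tilde nx Hx Qx \<rho>lim i e j) (at_right 0)"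
      by (rule Dx_tendsto) (use lim i in auto)
    have t2: "((\<lambda>\<epsilon>. Dt_op nt Ht Qt (\<lambda>i e j. \<epsilon> * g \<epsilon> k i e j) i e j) \<longlongrightarrow> Dt_op nt Ht Qt (\<lambda>i e j. 0) i e j) (at_right 0)"
      by (rule Dt_tendsto) (use hz k e j in auto)
    have t3: "((\<lambda>\<epsilon>. Dx_tilde nx Hx Qx (\<lambda>i e j. \<epsilon> * g \<epsilon> k' i e j) i e j) \<longlongrightarrow> Dx_tilde nx Hx Qx (\<lambda>i e j. 0) i e j) (at_right 0)"
      if "k' < nv" for k'
      by (rule Dx_tendsto) (use hz that i in auto)
    have t4: "((\<lambda>\<epsilon>. \<epsilon> * SAT Ht (g \<epsilon> k) (g0 k) i e j) \<longlongrightarrow> 0) (at_right 0)"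
      by (rule SAT_scaled) (use hz k e j in auto)
    have "(R \<longlongrightarrow> (- v k * Dx_tilde nx Hx Qx \<rho>lim i e j - 0 * Dt_op nt Ht Qt (\<lambda>i e j. 0) i e j
        - v k * Dx_tilde nx Hx Qx (\<lambda>i e j. 0) i e j
        + (\<Sum>k'<nv. \<omega> k' * v k' * Dx_tilde nx Hx Qx (\<lambda>i e j. 0) i e j)
        - 0 * \<sigma>a * 0 - 0 * 0) / \<sigma>s) (at_right 0)"
      unfolding R_def
      by (intro tendsto_intros t1 t2 t3 t4 id0 hz k i e j) (use sig_s in auto)
    then have "(R \<longlongrightarrow> G k i e j) (at_right 0)"
      by (simp add: Dx_zero Dt_zero G_def)
    moreover have "\<forall>\<^sub>F \<epsilon> in at_right 0. R \<epsilon> = g \<epsilon> k i e j"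
      using ev pos
    proof eventually_elim
      case (elim \<epsilon>)
      then have eq: "Dt_op nt Ht Qt (g \<epsilon> k) i e j
        + v k / \<epsilon> * Dx_tilde nx Hx Qx (g \<epsilon> k) i e j
        - 1 / \<epsilon> * (\<Sum>k'<nv. \<omega> k' * v k' * Dx_tilde nx Hx Qx (g \<epsilon> k') i e j)
        + v k / \<epsilon>\<^sup>2 * Dx_tilde nx Hx Qx (\<rho> \<epsilon>) i e j
      = - (\<sigma>s / \<epsilon>\<^sup>2 + \<sigma>a) * g \<epsilon> k i e j - SAT Ht (g \<epsilon> k) (g0 k) i e j"
        unfolding kinetic_scheme_def using i e j k by blast
      have s: "(\<Sum>k'<nv. \<omega> k' * v k' * Dx_tilde nx Hx Qx (\<lambda>i e j. \<epsilon> * g \<epsilon> k' i e j) i e j)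
          = \<epsilon> * (\<Sum>k'<nv. \<omega> k' * v k' * Dx_tilde nx Hx Qx (g \<epsilon> k') i e j)"
        by (simp add: sum_distrib_left Dx_scale[symmetric] algebra_simps)
      have s2: "(\<Sum>k'<nv. \<omega> k' * v k' * (\<epsilon> * Dx_tilde nx Hx Qx (g \<epsilon> k') i e j))
          = \<epsilon> * (\<Sum>k'<nv. \<omega> k' * v k' * Dx_tilde nx Hx Qx (g \<epsilon> k') i e j)"
        by (simp add: sum_distrib_left algebra_simps)
      show ?case unfolding R_def Dx_scale[symmetric] Dt_scale[symmetric] s2
        using alg1[OF elim(2) sig_s eq] by simp
    qed
    ultimately show ?thesis by (rule Lim_transform_eventually)
  qed
  define c where "c = (\<Sum>k<nv. \<omega> k * v k ^ 2) / \<sigma>s"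
  have sumG: "(\<Sum>k<nv. \<omega> k * v k * G k i e j) = - (c * Dx_tilde nx Hx Qx \<rho>lim i e j)" for i e j
    unfolding G_def c_def
    by (simp add: sum_distrib_left sum_distrib_right sum_divide_distrib power2_eq_square algebra_simps
       flip: sum_negf)
  show ?thesis unfolding limit_scheme_def
  proof (intro allI impI)
    fix i e j :: nat assume i: "i \<le> nt" and e: "e < 3" and j: "j \<le> nx"
    have L: "((\<lambda>\<epsilon>. Dt_op nt Ht Qt (\<rho> \<epsilon>) i e j
        + Dx_tilde nx Hx Qx (\<lambda>i' e' j'. \<Sum>k<nv. \<omega> k * v k * g \<epsilon> k i' e' j') i e j) \<longlongrightarrow>
        Dt_op nt Ht Qt \<rho>lim i e j + Dx_tilde nx Hx Qx (\<lambda>i' e' j'. \<Sum>k<nv. \<omega> k * v k * G k i' e' j') i e j) (at_right 0)"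
      by (intro tendsto_intros Dt_tendsto Dx_tendsto) (use lim gl e j i in \<open>auto intro!: tendsto_intros\<close>)
    have R: "((\<lambda>\<epsilon>. - \<sigma>a * \<rho> \<epsilon> i e j - SAT Ht (\<rho> \<epsilon>) \<rho>0 i e j) \<longlongrightarrow>
        - \<sigma>a * \<rho>lim i e j - SAT Ht \<rho>lim \<rho>0 i e j) (at_right 0)"
      by (intro tendsto_intros SAT_tendsto) (use lim e j i in auto)
    have L': "((\<lambda>\<epsilon>. Dt_op nt Ht Qt (\<rho> \<epsilon>) i e j
        + Dx_tilde nx Hx Qx (\<lambda>i' e' j'. \<Sum>k<nv. \<omega> k * v k * g \<epsilon> k i' e' j') i e j) \<longlongrightarrow>
        - \<sigma>a * \<rho>lim i e j - SAT Ht \<rho>lim \<rho>0 i e j) (at_right 0)"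
      using R
    proof (rule Lim_transform_eventually)
      show "\<forall>\<^sub>F \<epsilon> in at_right 0. - \<sigma>a * \<rho> \<epsilon> i e j - SAT Ht (\<rho> \<epsilon>) \<rho>0 i e j =
          Dt_op nt Ht Qt (\<rho> \<epsilon>) i e j + Dx_tilde nx Hx Qx (\<lambda>i' e' j'. \<Sum>k<nv. \<omega> k * v k * g \<epsilon> k i' e' j') i e j"
        using ev by eventually_elim (use i e j in \<open>auto simp: kinetic_scheme_def\<close>)
    qed
    have "Dt_op nt Ht Qt \<rho>lim i e j + Dx_tilde nx Hx Qx (\<lambda>i' e' j'. \<Sum>k<nv. \<omega> k * v k * G k i' e' j') i e j
        = - \<sigma>a * \<rho>lim i e j - SAT Ht \<rho>lim \<rho>0 i e j"
      using tendsto_unique[OF trivial_limit_at_right_real L L'] .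
    moreover have "Dx_tilde nx Hx Qx (\<lambda>i' e' j'. \<Sum>k<nv. \<omega> k * v k * G k i' e' j') i e j
        = - Dx_tilde nx Hx Qx (\<lambda>i' e' j'. c * Dx_tilde nx Hx Qx \<rho>lim i' e' j') i e j"
      unfolding sumG Dx_neg ..
    ultimately show "Dt_op nt Ht Qt \<rho>lim i e j =
       Dx_tilde nx Hx Qx (\<lambda>i' e' j'. (\<Sum>k<nv. \<omega> k * v k ^ 2) / \<sigma>s * Dx_tilde nx Hx Qx \<rho>lim i' e' j') i e j -
       \<sigma>a * \<rho>lim i e j - SAT Ht \<rho>lim \<rho>0 i e j"
      unfolding c_def by linarith
  qed
qed



lemma bdry_sum: "j \<le> n \<Longrightarrow> (\<Sum>l\<le>n. bdry_E n j l * r l) = bdry_E n j j * r j"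
  by (rule sum.mono_neutral_right[where S="{j}", simplified]) (auto simp: bdry_E_def)

lemma time_lemma:
  fixes Q :: rmat and r :: "nat \<Rightarrow> real"
  assumes "\<forall>i\<le>n. \<forall>j\<le>n. Q i j + Q j i = bdry_E n i j"
  shows "(\<Sum>i\<le>n. \<Sum>l\<le>n. r i * Q i l * r l) = (r n ^ 2 - r 0 ^ 2) / 2"
proof -
  let ?S = "(\<Sum>i\<le>n. \<Sum>l\<le>n. r i * Q i l * r l)"
  have sw: "?S = (\<Sum>i\<le>n. \<Sum>l\<le>n. r i * Q l i * r l)"
    by (subst sum.swap) (simp add: algebra_simps)
  have "2 * ?S = (\<Sum>i\<le>n. \<Sum>l\<le>n. r i * (Q i l + Q l i) * r l)"
    by (subst mult_2, subst (2) sw) (simp add: sum.distrib[symmetric] algebra_simps)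
  also have "\<dots> = (\<Sum>i\<le>n. \<Sum>l\<le>n. r i * (bdry_E n i l * r l))"
    using assms by (intro sum.cong refl) (auto simp: mult.assoc)
  also have "\<dots> = (\<Sum>i\<le>n. r i * (bdry_E n i i * r i))"
    by (intro sum.cong refl) (simp add: sum_distrib_left[symmetric] bdry_sum)
  also have "\<dots> = (\<Sum>i\<le>n. (if i = n then r i ^ 2 else 0) - (if i = 0 then r i ^ 2 else 0))"
    by (intro sum.cong refl) (simp add: bdry_E_def power2_eq_square algebra_simps)
  also have "\<dots> = r n ^ 2 - r 0 ^ 2"
    by (simp add: sum_subtractf)
  finally show ?thesis by simp
qed
lemma QG_skew:
  assumes "\<forall>i\<le>nx. \<forall>j\<le>nx. Qx i j + Qx j i = bdry_E nx i j"
    and "e < 3" "e' < 3" "j \<le> nx" "l \<le> nx"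
  shows "QG nx Qx e j e' l = - QG nx Qx e' l e j"
proof -
  have a: "Qx j l + Qx l j = bdry_E nx j l" using assms by auto
  have b: "bdry_E nx j l = bdry_E nx l j" by (auto simp: bdry_E_def)
  have d: "sbp_S nx Qx j l = - sbp_S nx Qx l j" unfolding sbp_S_def using a b by simp
  have "e = 0 \<or> e = 1 \<or> e = 2" "e' = 0 \<or> e' = 1 \<or> e' = 2" using assms by auto
  then show ?thesis unfolding QG_def using d by (elim disjE) simp_all
qed

lemma swap4:
  "(\<Sum>a\<in>A. \<Sum>b\<in>B. \<Sum>c\<in>C. \<Sum>d\<in>D. f a b c d) = (\<Sum>c\<in>C. \<Sum>d\<in>D. \<Sum>a\<in>A. \<Sum>b\<in>B. f a b c d)"
proof -
  have "(\<Sum>a\<in>A. \<Sum>b\<in>B. \<Sum>c\<in>C. \<Sum>d\<in>D. f a b c d) = (\<Sum>a\<in>A. \<Sum>c\<in>C. \<Sum>b\<in>B. \<Sum>d\<in>D. f a b c d)"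
    by (rule sum.cong[OF refl], rule sum.swap)
  also have "\<dots> = (\<Sum>c\<in>C. \<Sum>a\<in>A. \<Sum>b\<in>B. \<Sum>d\<in>D. f a b c d)"
    by (rule sum.swap)
  also have "\<dots> = (\<Sum>c\<in>C. \<Sum>a\<in>A. \<Sum>d\<in>D. \<Sum>b\<in>B. f a b c d)"
    by (rule sum.cong[OF refl], rule sum.cong[OF refl], rule sum.swap)
  also have "\<dots> = (\<Sum>c\<in>C. \<Sum>d\<in>D. \<Sum>a\<in>A. \<Sum>b\<in>B. f a b c d)"
    by (rule sum.cong[OF refl], rule sum.swap)
  finally show ?thesis .
qed

lemma spatial_lemma:
  assumes Q: "\<forall>i\<le>nx. \<forall>j\<le>nx. Qx i j + Qx j i = bdry_E nx i j"
    and H: "\<forall>j\<le>nx. 0 < Hx j j"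
  shows "(\<Sum>e<3. \<Sum>j\<le>nx. Hx j j * r i e j * Dx_tilde nx Hx Qx w i e j)
       = - (\<Sum>e<3. \<Sum>j\<le>nx. Hx j j * Dx_tilde nx Hx Qx r i e j * w i e j)"
proof -
  have "(\<Sum>e<3. \<Sum>j\<le>nx. Hx j j * r i e j * Dx_tilde nx Hx Qx w i e j)
      = (\<Sum>e<3. \<Sum>j\<le>nx. \<Sum>e'<3. \<Sum>l\<le>nx. r i e j * QG nx Qx e j e' l * w i e' l)"
  proof (intro sum.cong refl)
    fix e j assume "j \<in> {..nx}"
    then have h: "Hx j j \<noteq> 0" using H by auto
    have "Hx j j * r i e j * Dx_tilde nx Hx Qx w i e j
        = r i e j * (\<Sum>e'<3. \<Sum>l\<le>nx. QG nx Qx e j e' l * w i e' l)"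
      unfolding Dx_tilde_def using h by simp
    then show "Hx j j * r i e j * Dx_tilde nx Hx Qx w i e j
        = (\<Sum>e'<3. \<Sum>l\<le>nx. r i e j * QG nx Qx e j e' l * w i e' l)"
      by (simp add: sum_distrib_left mult.assoc)
  qed
  also have "\<dots> = (\<Sum>e'<3. \<Sum>l\<le>nx. \<Sum>e<3. \<Sum>j\<le>nx. r i e j * QG nx Qx e j e' l * w i e' l)"
    by (rule swap4)
  also have "\<dots> = (\<Sum>e'<3. \<Sum>l\<le>nx. - ((\<Sum>e<3. \<Sum>j\<le>nx. QG nx Qx e' l e j * r i e j) * w i e' l))"
  proof (intro sum.cong refl)
    fix e' l :: nat assume el: "e' \<in> {..<3}" "l \<in> {..nx}"
    have "(\<Sum>e<3. \<Sum>j\<le>nx. r i e j * QG nx Qx e j e' l * w i e' l)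
        = (\<Sum>e<3. \<Sum>j\<le>nx. - (QG nx Qx e' l e j * r i e j * w i e' l))"
    proof (intro sum.cong refl)
      fix e j :: nat assume "e \<in> {..<3}" "j \<in> {..nx}"
      then have "QG nx Qx e j e' l = - QG nx Qx e' l e j" using QG_skew[OF Q, of e e' j l] el by simp
      then show "r i e j * QG nx Qx e j e' l * w i e' l = - (QG nx Qx e' l e j * r i e j * w i e' l)"
        by simp
    qed
    also have "\<dots> = - ((\<Sum>e<3. \<Sum>j\<le>nx. QG nx Qx e' l e j * r i e j) * w i e' l)"
      by (simp add: sum_negf sum_distrib_right)
    finally show "(\<Sum>e<3. \<Sum>j\<le>nx. r i e j * QG nx Qx e j e' l * w i e' l)
        = - ((\<Sum>e<3. \<Sum>j\<le>nx. QG nx Qx e' l e j * r i e j) * w i e' l)" .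
  qed
  also have "\<dots> = (\<Sum>e'<3. \<Sum>l\<le>nx. - (Hx l l * Dx_tilde nx Hx Qx r i e' l * w i e' l))"
  proof (intro sum.cong refl)
    fix e' l :: nat assume el: "e' \<in> {..<3}" "l \<in> {..nx}"
    then have "Hx l l \<noteq> 0" using H by auto
    then show "- ((\<Sum>e<3. \<Sum>j\<le>nx. QG nx Qx e' l e j * r i e j) * w i e' l)
       = - (Hx l l * Dx_tilde nx Hx Qx r i e' l * w i e' l)"
      unfolding Dx_tilde_def by simp
  qed
  also have "\<dots> = - (\<Sum>e<3. \<Sum>j\<le>nx. Hx j j * Dx_tilde nx Hx Qx r i e j * w i e j)"
    by (simp add: sum_negf)
  finally show ?thesis .
qed



lemma part3:
  assumes sbp_t: "is_sbp nt pt tn Ht Qt" and sbp_x: "is_sbp nx px xn Hx Qx"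
    and c: "0 \<le> (\<Sum>k<nv. \<omega> k * v k ^ 2) / \<sigma>s" and sa: "0 \<le> \<sigma>a"
    and ls: "limit_scheme nt nx Ht Qt Hx Qx nv v \<omega> \<sigma>s \<sigma>a \<rho> \<rho>0"
  shows "senergy nx Hx (\<rho> nt) \<le> senergy nx Hx \<rho>0"
proof -
  define c where "c = (\<Sum>k<nv. \<omega> k * v k ^ 2) / \<sigma>s"
  have c0: "0 \<le> c" using c c_def by simp
  have Ht: "\<forall>i\<le>nt. 0 < Ht i i" and Qt: "\<forall>i\<le>nt. \<forall>j\<le>nt. Qt i j + Qt j i = bdry_E nt i j"
    using sbp_t unfolding is_sbp_def by auto
  have Hx: "\<forall>j\<le>nx. 0 < Hx j j" and Qx: "\<forall>i\<le>nx. \<forall>j\<le>nx. Qx i j + Qx j i = bdry_E nx i j"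
    using sbp_x unfolding is_sbp_def by auto
  define w where "w = (\<lambda>i' e' j'. c * Dx_tilde nx Hx Qx \<rho> i' e' j')"
  have eq: "Dt_op nt Ht Qt \<rho> i e j = Dx_tilde nx Hx Qx w i e j - \<sigma>a * \<rho> i e j - SAT Ht \<rho> \<rho>0 i e j"
    if "i \<le> nt" "e < 3" "j \<le> nx" for i e j
    using ls that unfolding limit_scheme_def w_def c_def by blast
  define T where "T = (\<Sum>i\<le>nt. \<Sum>e<3. \<Sum>j\<le>nx. Ht i i * Hx j j * \<rho> i e j * Dt_op nt Ht Qt \<rho> i e j)"
  define X where "X = (\<Sum>i\<le>nt. \<Sum>e<3. \<Sum>j\<le>nx. Ht i i * Hx j j * \<rho> i e j * Dx_tilde nx Hx Qx w i e j)"
  define Y where "Y = (\<Sum>i\<le>nt. \<Sum>e<3. \<Sum>j\<le>nx. Ht i i * Hx j j * \<rho> i e j * (\<sigma>a * \<rho> i e j))"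
  define Z where "Z = (\<Sum>i\<le>nt. \<Sum>e<3. \<Sum>j\<le>nx. Ht i i * Hx j j * \<rho> i e j * SAT Ht \<rho> \<rho>0 i e j)"
  have TXYZ: "T = X - Y - Z"
  proof -
    have "T = (\<Sum>i\<le>nt. \<Sum>e<3. \<Sum>j\<le>nx. Ht i i * Hx j j * \<rho> i e j * Dx_tilde nx Hx Qx w i e j
        - Ht i i * Hx j j * \<rho> i e j * (\<sigma>a * \<rho> i e j) - Ht i i * Hx j j * \<rho> i e j * SAT Ht \<rho> \<rho>0 i e j)"
      unfolding T_def by (intro sum.cong refl) (simp add: eq right_diff_distrib)
    then show ?thesis unfolding X_def Y_def Z_def by (simp add: sum_subtractf)
  qed
  have T2: "T = (\<Sum>e<3. \<Sum>j\<le>nx. Hx j j * (((\<rho> nt e j)\<^sup>2 - (\<rho> 0 e j)\<^sup>2) / 2))"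
  proof -
    have "T = (\<Sum>i\<le>nt. \<Sum>e<3. \<Sum>j\<le>nx. Hx j j * (\<Sum>l\<le>nt. \<rho> i e j * Qt i l * \<rho> l e j))"
      unfolding T_def
    proof (intro sum.cong refl)
      fix i e j assume "i \<in> {..nt}"
      then have "Ht i i \<noteq> 0" using Ht by auto
      then show "Ht i i * Hx j j * \<rho> i e j * Dt_op nt Ht Qt \<rho> i e j
          = Hx j j * (\<Sum>l\<le>nt. \<rho> i e j * Qt i l * \<rho> l e j)"
        unfolding Dt_op_def sbp_D_def by (simp add: sum_distrib_left algebra_simps)
    qed
    also have "\<dots> = (\<Sum>e<3. \<Sum>j\<le>nx. \<Sum>i\<le>nt. Hx j j * (\<Sum>l\<le>nt. \<rho> i e j * Qt i l * \<rho> l e j))"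
      by (subst sum.swap, rule sum.cong[OF refl], rule sum.swap)
    also have "\<dots> = (\<Sum>e<3. \<Sum>j\<le>nx. Hx j j * (\<Sum>i\<le>nt. \<Sum>l\<le>nt. \<rho> i e j * Qt i l * \<rho> l e j))"
      by (simp add: sum_distrib_left)
    also have "\<dots> = (\<Sum>e<3. \<Sum>j\<le>nx. Hx j j * (((\<rho> nt e j)\<^sup>2 - (\<rho> 0 e j)\<^sup>2) / 2))"
      by (intro sum.cong refl) (simp only: time_lemma[OF Qt, of "\<lambda>i. \<rho> i _ _"])
    finally show ?thesis .
  qed
  have X0: "X \<le> 0"
  proof -
    have "X = (\<Sum>i\<le>nt. Ht i i * (\<Sum>e<3. \<Sum>j\<le>nx. Hx j j * \<rho> i e j * Dx_tilde nx Hx Qx w i e j))"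
      unfolding X_def by (simp add: sum_distrib_left mult.assoc)
    also have "\<dots> = (\<Sum>i\<le>nt. Ht i i * (- (\<Sum>e<3. \<Sum>j\<le>nx. Hx j j * Dx_tilde nx Hx Qx \<rho> i e j * w i e j)))"
      by (simp add: spatial_lemma[where nx=nx and Qx=Qx and Hx=Hx, OF Qx Hx])
    also have "\<dots> \<le> 0"
    proof (rule sum_nonpos)
      fix i assume "i \<in> {..nt}"
      then have "0 < Ht i i" using Ht by auto
      moreover have "0 \<le> (\<Sum>e<3. \<Sum>j\<le>nx. Hx j j * Dx_tilde nx Hx Qx \<rho> i e j * w i e j)"
        unfolding w_def
      proof (intro sum_nonneg)
        fix e j assume "j \<in> {..nx}"
        then have "0 < Hx j j" using Hx by auto
        then show "0 \<le> Hx j j * Dx_tilde nx Hx Qx \<rho> i e j * (c * Dx_tilde nx Hx Qx \<rho> i e j)"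
        proof -
          have "Hx j j * Dx_tilde nx Hx Qx \<rho> i e j * (c * Dx_tilde nx Hx Qx \<rho> i e j)
             = (Hx j j * c) * (Dx_tilde nx Hx Qx \<rho> i e j)\<^sup>2" by (simp add: power2_eq_square algebra_simps)
          moreover have "0 \<le> (Hx j j * c) * (Dx_tilde nx Hx Qx \<rho> i e j)\<^sup>2"
            using c0 \<open>0 < Hx j j\<close> by simp
          ultimately show ?thesis by linarith
        qed
      qed
      ultimately show "Ht i i * (- (\<Sum>e<3. \<Sum>j\<le>nx. Hx j j * Dx_tilde nx Hx Qx \<rho> i e j * w i e j)) \<le> 0"
        by (simp add: mult_nonneg_nonneg)
    qed
    finally show ?thesis .
  qed
  have Y0: "0 \<le> Y"
    unfolding Y_def
  proof (intro sum_nonneg)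
    fix i e j assume "i \<in> {..nt}" "j \<in> {..nx}"
    then have "0 < Ht i i" "0 < Hx j j" using Ht Hx by auto
    then show "0 \<le> Ht i i * Hx j j * \<rho> i e j * (\<sigma>a * \<rho> i e j)"
    proof -
      have "Ht i i * Hx j j * \<rho> i e j * (\<sigma>a * \<rho> i e j) = (Ht i i * Hx j j * \<sigma>a) * (\<rho> i e j)\<^sup>2"
        by (simp add: power2_eq_square algebra_simps)
      moreover have "0 \<le> (Ht i i * Hx j j * \<sigma>a) * (\<rho> i e j)\<^sup>2"
        using sa \<open>0 < Ht i i\<close> \<open>0 < Hx j j\<close> by simp
      ultimately show ?thesis by linarith
    qed
  qed
  have Z2: "Z = (\<Sum>e<3. \<Sum>j\<le>nx. Hx j j * (\<rho> 0 e j * (\<rho> 0 e j - \<rho>0 e j)))"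
  proof -
    have "Z = (\<Sum>i\<in>{0}. \<Sum>e<3. \<Sum>j\<le>nx. Ht i i * Hx j j * \<rho> i e j * SAT Ht \<rho> \<rho>0 i e j)"
      unfolding Z_def by (rule sum.mono_neutral_right) (auto simp: SAT_def)
    also have "\<dots> = (\<Sum>e<3. \<Sum>j\<le>nx. Hx j j * (\<rho> 0 e j * (\<rho> 0 e j - \<rho>0 e j)))"
    proof -
      have "Ht 0 0 \<noteq> 0" using Ht by auto
      then show ?thesis by (simp add: SAT_def)
    qed
    finally show ?thesis .
  qed
  have key: "T \<le> - Z" using TXYZ X0 Y0 by linarith
  have "senergy nx Hx (\<rho> nt) - senergy nx Hx \<rho>0
     = (\<Sum>e<3. \<Sum>j\<le>nx. 2 * (Hx j j * (((\<rho> nt e j)\<^sup>2 - (\<rho> 0 e j)\<^sup>2) / 2))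
          + 2 * (Hx j j * (\<rho> 0 e j * (\<rho> 0 e j - \<rho>0 e j))) - Hx j j * (\<rho> 0 e j - \<rho>0 e j)\<^sup>2)"
    unfolding senergy_def sum_subtractf[symmetric]
    by (intro sum.cong refl) (simp add: power2_eq_square field_simps)
  also have "\<dots> = 2 * T + 2 * Z - (\<Sum>e<3. \<Sum>j\<le>nx. Hx j j * (\<rho> 0 e j - \<rho>0 e j)\<^sup>2)"
    unfolding T2 Z2 by (simp add: sum_subtractf sum.distrib sum_distrib_left)
  also have "\<dots> \<le> 0"
  proof -
    have "0 \<le> (\<Sum>e<3. \<Sum>j\<le>nx. Hx j j * (\<rho> 0 e j - \<rho>0 e j)\<^sup>2)"
      using Hx by (intro sum_nonneg) auto
    then show ?thesis using key by linarith
  qed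
  finally show ?thesis by simp
qed



lemma exact_sum:
  assumes "is_sbp n p x H Q" "P \<le> p" "i \<le> n"
  shows "(\<Sum>j\<le>n. sbp_D H Q i j * (\<Sum>k\<le>P. b k * x j ^ k)) = (\<Sum>k\<le>P. b k * (of_nat k * x i ^ (k - 1)))"
proof -
  have ex: "\<forall>k\<le>p. \<forall>i\<le>n. (\<Sum>j\<le>n. sbp_D H Q i j * x j ^ k) = of_nat k * x i ^ (k - 1)"
    using assms(1) unfolding is_sbp_def by blast
  have "(\<Sum>j\<le>n. sbp_D H Q i j * (\<Sum>k\<le>P. b k * x j ^ k)) = (\<Sum>k\<le>P. b k * (\<Sum>j\<le>n. sbp_D H Q i j * x j ^ k))"
    by (simp add: sum_distrib_left algebra_simps) (rule sum.swap)
  also have "\<dots> = (\<Sum>k\<le>P. b k * (of_nat k * x i ^ (k - 1)))"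
    using ex assms(2,3) by (intro sum.cong refl) auto
  finally show ?thesis .
qed

lemma deriv_sum:
  "((\<lambda>y. \<Sum>k\<le>P. b k * y ^ k) has_real_derivative (\<Sum>k\<le>P. b k * (of_nat k * y ^ (k - 1)))) (at y)"
  by (intro DERIV_sum DERIV_cmult) (simp add: DERIV_pow)

lemma poly_pderiv_alt:
  "poly (pderiv q) (y::real) = (\<Sum>k\<le>degree q. coeff q k * (of_nat k * y ^ (k - 1)))"
proof -
  have "poly q = (\<lambda>y. \<Sum>k\<le>degree q. coeff q k * y ^ k)" by (rule ext) (simp add: poly_altdef)
  then have "(poly q has_real_derivative (\<Sum>k\<le>degree q. coeff q k * (of_nat k * y ^ (k - 1)))) (at y)"
    by (subst \<open>poly q = _\<close>) (rule deriv_sum)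
  then show ?thesis by (rule DERIV_unique[OF poly_DERIV])
qed

lemma exact_poly:
  assumes "is_sbp n p x H Q" "degree q \<le> p" "i \<le> n"
  shows "(\<Sum>j\<le>n. sbp_D H Q i j * poly q (x j)) = poly (pderiv q) (x i)"
proof -
  have "(\<Sum>j\<le>n. sbp_D H Q i j * poly q (x j)) = (\<Sum>j\<le>n. sbp_D H Q i j * (\<Sum>k\<le>degree q. coeff q k * x j ^ k))"
  proof (intro sum.cong refl)
    fix j show "sbp_D H Q i j * poly q (x j) = sbp_D H Q i j * (\<Sum>k\<le>degree q. coeff q k * x j ^ k)"
      using poly_altdef[of q "x j"] by simp
  qed
  also have "\<dots> = poly (pderiv q) (x i)"
    unfolding exact_sum[OF assms(1,2,3)] poly_pderiv_alt ..
  finally show ?thesis .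
qed

lemma Dx_formula:
  assumes "e < 3" "0 < Hx j j"
  shows "Dx_tilde nx Hx Qx u i e j * Hx j j = (\<Sum>l\<le>nx. Qx j l * u i e l) - bdry_E nx j j * u i e j / 2
     + (if j = nx then u i ((e + 1) mod 3) 0 / 2 else 0) - (if j = 0 then u i ((e + 2) mod 3) nx / 2 else 0)"
proof -
  have s3: "{..<3::nat} = {0,1,2}" by auto
  have d1: "(\<Sum>l\<le>nx. (if j = nx \<and> l = 0 then 1/2 else 0) * f l) = (if j = nx then f 0 / 2 else 0)" for f :: "nat \<Rightarrow> real"
  proof (cases "j = nx")
    case True
    have "(\<lambda>l. (if j = nx \<and> l = 0 then 1/2 else 0) * f l) = (\<lambda>l. if l = 0 then f 0 / 2 else 0)"
      using True by auto
    then have "(\<Sum>l\<le>nx. (if j = nx \<and> l = 0 then 1/2 else 0) * f l) = (\<Sum>l\<le>nx. if l = 0 then f 0 / 2 else 0)"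
      by (simp only:)
    then show ?thesis using True by simp
  qed simp
  have d2: "(\<Sum>l\<le>nx. (if j = 0 \<and> l = nx then 1/2 else 0) * f l) = (if j = 0 then f nx / 2 else 0)" for f :: "nat \<Rightarrow> real"
  proof (cases "j = 0")
    case True
    have "(\<lambda>l. (if j = 0 \<and> l = nx then 1/2 else 0) * f l) = (\<lambda>l. if l = nx then f nx / 2 else 0)"
      using True by auto
    then have "(\<Sum>l\<le>nx. (if j = 0 \<and> l = nx then 1/2 else 0) * f l) = (\<Sum>l\<le>nx. if l = nx then f nx / 2 else 0)"
      by (simp only:)
    then show ?thesis using True by simp
  qed simp
  have bs: "(\<Sum>l\<le>nx. bdry_E nx j l * f l) = bdry_E nx j j * f j" if "j \<le> nx" for f :: "nat \<Rightarrow> real"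
    by (rule sum.mono_neutral_right[where S="{j}", simplified]) (use that in \<open>auto simp: bdry_E_def\<close>)
  have bs0: "bdry_E nx j j = 0" if "\<not> j \<le> nx" using that by (auto simp: bdry_E_def)
  have S: "(\<Sum>l\<le>nx. sbp_S nx Qx j l * f l) = (\<Sum>l\<le>nx. Qx j l * f l) - bdry_E nx j j * f j / 2" for f
  proof (cases "j \<le> nx")
    case True
    have "(\<Sum>l\<le>nx. sbp_S nx Qx j l * f l) = (\<Sum>l\<le>nx. Qx j l * f l) - (\<Sum>l\<le>nx. bdry_E nx j l * f l) / 2"
      unfolding sbp_S_def by (simp add: left_diff_distrib sum_subtractf sum_divide_distrib)
    then show ?thesis using bs[OF True] by simp
  next
    case False
    then have "bdry_E nx j l = 0" for l by (auto simp: bdry_E_def)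
    then show ?thesis unfolding sbp_S_def using bs0[OF False] by simp
  qed
  have "Dx_tilde nx Hx Qx u i e j * Hx j j = (\<Sum>e'<3. \<Sum>l\<le>nx. QG nx Qx e j e' l * u i e' l)"
    unfolding Dx_tilde_def using assms(2) by simp
  also have "\<dots> = (\<Sum>l\<le>nx. Qx j l * u i e l) - bdry_E nx j j * u i e j / 2
     + (if j = nx then u i ((e + 1) mod 3) 0 / 2 else 0) - (if j = 0 then u i ((e + 2) mod 3) nx / 2 else 0)"
  proof -
    have sif: "(\<Sum>l\<le>nx. if P then f l else 0) = (if P then (\<Sum>l\<le>nx. f l) else 0)" for P and f :: "nat \<Rightarrow> real"
      by simp
    have pt: "QG nx Qx e j e' l * u i e' l =
        (if e' = e then sbp_S nx Qx j l * u i e l else 0)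
      + (if e' = (e + 1) mod 3 then (if j = nx \<and> l = 0 then 1/2 else 0) * u i ((e + 1) mod 3) l else 0)
      - (if e' = (e + 2) mod 3 then (if j = 0 \<and> l = nx then 1/2 else 0) * u i ((e + 2) mod 3) l else 0)" for e' l
      unfolding QG_def by (simp add: algebra_simps)
    have "(\<Sum>e'<3. \<Sum>l\<le>nx. QG nx Qx e j e' l * u i e' l) =
       (\<Sum>e'<3. (if e' = e then (\<Sum>l\<le>nx. sbp_S nx Qx j l * u i e l) else 0)
      + (if e' = (e + 1) mod 3 then (\<Sum>l\<le>nx. (if j = nx \<and> l = 0 then 1/2 else 0) * u i ((e + 1) mod 3) l) else 0)
      - (if e' = (e + 2) mod 3 then (\<Sum>l\<le>nx. (if j = 0 \<and> l = nx then 1/2 else 0) * u i ((e + 2) mod 3) l) else 0))"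
      unfolding pt by (simp only: sum_subtractf sum.distrib sif)
    also have "\<dots> = (\<Sum>l\<le>nx. sbp_S nx Qx j l * u i e l)
      + (\<Sum>l\<le>nx. (if j = nx \<and> l = 0 then 1/2 else 0) * u i ((e + 1) mod 3) l)
      - (\<Sum>l\<le>nx. (if j = 0 \<and> l = nx then 1/2 else 0) * u i ((e + 2) mod 3) l)"
      using assms(1) by (simp only: sum_subtractf sum.distrib sum.delta' finite_lessThan lessThan_iff) simp
    also have "\<dots> = (\<Sum>l\<le>nx. Qx j l * u i e l) - bdry_E nx j j * u i e j / 2
     + (if j = nx then u i ((e + 1) mod 3) 0 / 2 else 0) - (if j = 0 then u i ((e + 2) mod 3) nx / 2 else 0)"
      by (subst d1, subst d2, subst S, rule refl)
    finally show ?thesis .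
  qed
  finally show ?thesis .
qed



lemma Dx_exact:
  assumes sbp: "is_sbp nx px xn Hx Qx"
    and deg: "\<forall>e<3. degree (q e) \<le> px"
    and cont: "\<forall>e<3. poly (q e) (xn nx) = poly (q ((e + 1) mod 3)) (xn 0)"
    and u: "\<forall>e'<3. \<forall>l\<le>nx. u i e' l = poly (q e') (xn l)"
    and e: "e < 3" and j: "j \<le> nx"
  shows "Dx_tilde nx Hx Qx u i e j = poly (pderiv (q e)) (xn j)"
proof -
  have Hpos: "\<forall>j\<le>nx. 0 < Hx j j" using sbp unfolding is_sbp_def by auto
  then have H: "0 < Hx j j" using j by auto
  have "(\<Sum>l\<le>nx. Qx j l * u i e l) = Hx j j * (\<Sum>l\<le>nx. sbp_D Hx Qx j l * poly (q e) (xn l))"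
    unfolding sbp_D_def sum_distrib_left using H u e by (intro sum.cong refl) auto
  also have "\<dots> = Hx j j * poly (pderiv (q e)) (xn j)"
    using exact_poly[OF sbp _ j, of "q e"] deg e by simp
  finally have QS: "(\<Sum>l\<le>nx. Qx j l * u i e l) = Hx j j * poly (pderiv (q e)) (xn j)" .
  have e1: "(e + 1) mod 3 < 3" "(e + 2) mod 3 < 3" by auto
  have ee: "((e + 2) mod 3 + 1) mod 3 = e" proof -
    have "e = 0 \<or> e = 1 \<or> e = 2" using e by auto
    then show ?thesis by (elim disjE) simp_all
  qed
  have c1: "u i ((e + 1) mod 3) 0 = u i e nx"
    using u e e1 cont by simp
  have c2: "u i ((e + 2) mod 3) nx = u i e 0"
    using u e e1 cont ee by (metis le0 order_refl)
  have "Dx_tilde nx Hx Qx u i e j * Hx j j = Hx j j * poly (pderiv (q e)) (xn j)"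
    unfolding Dx_formula[where Hx=Hx and j=j and nx=nx and Qx=Qx and u=u and i=i, OF e H] QS c1 c2 by (auto simp: bdry_E_def)
  then show ?thesis using H by (simp add: mult.commute)
qed

definition Py :: "nat \<Rightarrow> nat \<Rightarrow> (nat \<Rightarrow> nat \<Rightarrow> nat \<Rightarrow> real) \<Rightarrow> nat \<Rightarrow> real \<Rightarrow> real poly" where
  "Py pt px a e s = (\<Sum>jj\<le>px. monom (\<Sum>ii\<le>pt. a e ii jj * s ^ ii) jj)"
definition Ps :: "nat \<Rightarrow> nat \<Rightarrow> (nat \<Rightarrow> nat \<Rightarrow> nat \<Rightarrow> real) \<Rightarrow> nat \<Rightarrow> real \<Rightarrow> real poly" where
  "Ps pt px a e y = (\<Sum>ii\<le>pt. monom (\<Sum>jj\<le>px. a e ii jj * y ^ jj) ii)"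

lemma Py_poly: "epoly pt px a e s = poly (Py pt px a e s)"
proof (rule ext)
  fix y
  have "poly (Py pt px a e s) y = (\<Sum>jj\<le>px. \<Sum>ii\<le>pt. a e ii jj * s ^ ii * y ^ jj)"
    by (simp add: Py_def poly_sum poly_monom sum_distrib_right)
  also have "\<dots> = epoly pt px a e s y"
    unfolding epoly_def by (rule sum.swap)
  finally show "epoly pt px a e s y = poly (Py pt px a e s) y" by simp
qed

lemma Ps_poly: "(\<lambda>s. epoly pt px a e s y) = poly (Ps pt px a e y)"
proof (rule ext)
  fix s
  have "poly (Ps pt px a e y) s = (\<Sum>ii\<le>pt. \<Sum>jj\<le>px. a e ii jj * y ^ jj * s ^ ii)"
    by (simp add: Ps_def poly_sum poly_monom sum_distrib_right)
  also have "\<dots> = epoly pt px a e s y"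
    unfolding epoly_def by (intro sum.cong refl) (simp add: algebra_simps)
  finally show "epoly pt px a e s y = poly (Ps pt px a e y) s" by simp
qed

lemma Py_deg: "degree (Py pt px a e s) \<le> px"
  unfolding Py_def by (intro degree_sum_le) (auto intro: order_trans[OF degree_monom_le])

lemma Ps_deg: "degree (Ps pt px a e y) \<le> pt"
  unfolding Ps_def by (intro degree_sum_le) (auto intro: order_trans[OF degree_monom_le])

lemma deriv_poly: "deriv (poly p) x = poly (pderiv p) (x::real)"
  by (rule DERIV_imp_deriv) (rule poly_DERIV)

lemma deriv_poly_fun: "deriv (poly p) = poly (pderiv (p :: real poly))"
  by (rule ext) (rule deriv_poly)



lemma part2:
  assumes sbp_t: "is_sbp nt pt tn Ht Qt" and sbp_x: "is_sbp nx px xn Hx Qx"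
    and hyp: "\<forall>e<3. \<forall>s.
            epoly pt px a e s (xn nx) = epoly pt px a ((e + 1) mod 3) s (xn 0)
          \<and> deriv (epoly pt px a e s) (xn nx) = deriv (epoly pt px a ((e + 1) mod 3) s) (xn 0)"
    and i: "i \<le> nt" and e: "e < 3" and j: "j \<le> nx"
  shows "Dt_op nt Ht Qt (\<lambda>i' e' j'. epoly pt px a e' (tn i') (xn j')) i e j
            - Dx_tilde nx Hx Qx (\<lambda>i' e' j'. c
                 * Dx_tilde nx Hx Qx (\<lambda>i'' e'' j''. epoly pt px a e'' (tn i'') (xn j'')) i' e' j') i e j
            + \<sigma>a * epoly pt px a e (tn i) (xn j)
            + SAT Ht (\<lambda>i' e' j'. epoly pt px a e' (tn i') (xn j'))
                     (\<lambda>e' j'. epoly pt px a e' (tn 0) (xn j')) i e j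
          = deriv (\<lambda>s. epoly pt px a e s (xn j)) (tn i)
            - c * deriv (deriv (epoly pt px a e (tn i))) (xn j)
            + \<sigma>a * epoly pt px a e (tn i) (xn j)"
proof -
  define u where "u = (\<lambda>i' e' j'. epoly pt px a e' (tn i') (xn j'))"
  define P where "P = (\<lambda>e s. Py pt px a e s)"
  have uP: "u i' e' l = poly (P e' (tn i')) (xn l)" for i' e' l
    unfolding u_def P_def by (simp add: Py_poly)
  have degP: "degree (P e s) \<le> px" for e s unfolding P_def by (rule Py_deg)
  have contP: "\<forall>e<3. poly (P e s) (xn nx) = poly (P ((e + 1) mod 3) s) (xn 0)" for s
    using hyp unfolding P_def by (simp add: Py_poly)
  have contD: "\<forall>e<3. poly (pderiv (P e s)) (xn nx) = poly (pderiv (P ((e + 1) mod 3) s)) (xn 0)" for s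
    using hyp unfolding P_def by (simp add: Py_poly deriv_poly)
  have D1: "Dx_tilde nx Hx Qx u i' e' l = poly (pderiv (P e' (tn i'))) (xn l)"
    if "e' < 3" "l \<le> nx" for i' e' l
    by (rule Dx_exact[OF sbp_x _ contP]) (use degP uP that in auto)
  have D2: "Dx_tilde nx Hx Qx (\<lambda>i' e' j'. c * Dx_tilde nx Hx Qx u i' e' j') i e j
      = poly (pderiv (smult c (pderiv (P e (tn i))))) (xn j)"
  proof (rule Dx_exact[OF sbp_x _ _ _ e j])
    show "\<forall>e<3. degree (smult c (pderiv (P e (tn i)))) \<le> px"
    proof (intro allI impI)
      fix e' :: nat
      have "degree (P e' (tn i)) - 1 \<le> px" using degP[of e' "tn i"] by linarith
      then show "degree (smult c (pderiv (P e' (tn i)))) \<le> px"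
        by (intro order_trans[OF degree_smult_le]) (simp add: degree_pderiv)
    qed
    show "\<forall>e<3. poly (smult c (pderiv (P e (tn i)))) (xn nx) = poly (smult c (pderiv (P ((e + 1) mod 3) (tn i)))) (xn 0)"
      using contD by simp
    show "\<forall>e'<3. \<forall>l\<le>nx. c * Dx_tilde nx Hx Qx u i e' l = poly (smult c (pderiv (P e' (tn i)))) (xn l)"
      using D1 by simp
  qed
  have R2: "deriv (deriv (epoly pt px a e (tn i))) (xn j) = poly (pderiv (pderiv (P e (tn i)))) (xn j)"
    unfolding P_def Py_poly deriv_poly_fun ..
  have Dt: "Dt_op nt Ht Qt u i e j = poly (pderiv (Ps pt px a e (xn j))) (tn i)"
  proof -
    have "Dt_op nt Ht Qt u i e j = (\<Sum>l\<le>nt. sbp_D Ht Qt i l * poly (Ps pt px a e (xn j)) (tn l))"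
      unfolding Dt_op_def u_def using Ps_poly[of pt px a e "xn j"] by (metis (no_types, lifting))
    also have "\<dots> = poly (pderiv (Ps pt px a e (xn j))) (tn i)"
      by (rule exact_poly[OF sbp_t Ps_deg i])
    finally show ?thesis .
  qed
  have R1: "deriv (\<lambda>s. epoly pt px a e s (xn j)) (tn i) = poly (pderiv (Ps pt px a e (xn j))) (tn i)"
    unfolding Ps_poly deriv_poly ..
  have S0: "SAT Ht u (\<lambda>e' j'. epoly pt px a e' (tn 0) (xn j')) i e j = 0"
    unfolding SAT_def u_def by simp
  show ?thesis
    using D2 Dt S0 R1 R2 unfolding u_def[symmetric]
    by (simp add: pderiv_smult)
qed


theorem theorem3p9:
  fixes nt nx nv pt px :: nat
    and tn xn :: "nat \<Rightarrow> real"
    and Ht Qt Hx Qx :: rmat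
    and v \<omega> :: "nat \<Rightarrow> real"
    and \<sigma>s \<sigma>a :: real
  assumes sbp_t: "is_sbp nt pt tn Ht Qt"
    and sbp_x: "is_sbp nx px xn Hx Qx"
    and w_pos: "\<forall>k<nv. 0 < \<omega> k"
    and w_sum: "(\<Sum>k<nv. \<omega> k) = 1"
    and w_mom: "(\<Sum>k<nv. \<omega> k * v k) = 0"
    and sig_s: "0 < \<sigma>s"
    and sig_a: "0 \<le> \<sigma>a"
  shows
    \<comment> \<open>(1) formal limit epsilon -> 0: the scheme reduces to the limit scheme\<close>
    "(\<forall>(\<rho> :: real \<Rightarrow> grid) (g :: real \<Rightarrow> nat \<Rightarrow> grid) \<rho>0 g0 \<rho>lim.
        (\<forall>\<^sub>F \<epsilon> in at_right 0.
            kinetic_scheme nt nx Ht Qt Hx Qx nv v \<omega> \<sigma>s \<sigma>a \<epsilon> (\<rho> \<epsilon>) (g \<epsilon>) \<rho>0 g0)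
      \<and> (\<forall>i\<le>nt. \<forall>e<3. \<forall>j\<le>nx. ((\<lambda>\<epsilon>. \<rho> \<epsilon> i e j) \<longlongrightarrow> \<rho>lim i e j) (at_right 0))
      \<and> (\<exists>B. \<forall>\<^sub>F \<epsilon> in at_right 0.
            \<forall>k<nv. \<forall>i\<le>nt. \<forall>e<3. \<forall>j\<le>nx. \<bar>g \<epsilon> k i e j\<bar> \<le> B)
      \<longrightarrow> limit_scheme nt nx Ht Qt Hx Qx nv v \<omega> \<sigma>s \<sigma>a \<rho>lim \<rho>0)
   \<and>
    \<comment> \<open>(2) consistency of the limit scheme: exact for element-wise polynomials
        (degree <= pt in t, <= px in x) that are C^1 across the periodic interfaces\<close>
    (\<forall>a. (\<forall>e<3. \<forall>s.
            epoly pt px a e s (xn nx) = epoly pt px a ((e + 1) mod 3) s (xn 0)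
          \<and> deriv (epoly pt px a e s) (xn nx) = deriv (epoly pt px a ((e + 1) mod 3) s) (xn 0))
      \<longrightarrow> (\<forall>i\<le>nt. \<forall>e<3. \<forall>j\<le>nx.
            Dt_op nt Ht Qt (\<lambda>i' e' j'. epoly pt px a e' (tn i') (xn j')) i e j
            - Dx_tilde nx Hx Qx (\<lambda>i' e' j'. (\<Sum>k<nv. \<omega> k * v k ^ 2) / \<sigma>s
                 * Dx_tilde nx Hx Qx (\<lambda>i'' e'' j''. epoly pt px a e'' (tn i'') (xn j'')) i' e' j') i e j
            + \<sigma>a * epoly pt px a e (tn i) (xn j)
            + SAT Ht (\<lambda>i' e' j'. epoly pt px a e' (tn i') (xn j'))
                     (\<lambda>e' j'. epoly pt px a e' (tn 0) (xn j')) i e j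
          = deriv (\<lambda>s. epoly pt px a e s (xn j)) (tn i)
            - (\<Sum>k<nv. \<omega> k * v k ^ 2) / \<sigma>s
                 * deriv (deriv (epoly pt px a e (tn i))) (xn j)
            + \<sigma>a * epoly pt px a e (tn i) (xn j)))
   \<and>
    \<comment> \<open>(3) stability of the limit scheme: final-time energy bounded by initial data\<close>
    (\<forall>\<rho> \<rho>0. limit_scheme nt nx Ht Qt Hx Qx nv v \<omega> \<sigma>s \<sigma>a \<rho> \<rho>0
       \<longrightarrow> senergy nx Hx (\<rho> nt) \<le> senergy nx Hx \<rho>0)"
proof (intro conjI allI impI)
  fix \<rho> :: "real \<Rightarrow> grid" and g :: "real \<Rightarrow> nat \<Rightarrow> grid" and \<rho>0 g0 \<rho>lim
  assume H: "(\<forall>\<^sub>F \<epsilon> in at_right 0.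
            kinetic_scheme nt nx Ht Qt Hx Qx nv v \<omega> \<sigma>s \<sigma>a \<epsilon> (\<rho> \<epsilon>) (g \<epsilon>) \<rho>0 g0)
      \<and> (\<forall>i\<le>nt. \<forall>e<3. \<forall>j\<le>nx. ((\<lambda>\<epsilon>. \<rho> \<epsilon> i e j) \<longlongrightarrow> \<rho>lim i e j) (at_right 0))
      \<and> (\<exists>B. \<forall>\<^sub>F \<epsilon> in at_right 0.
            \<forall>k<nv. \<forall>i\<le>nt. \<forall>e<3. \<forall>j\<le>nx. \<bar>g \<epsilon> k i e j\<bar> \<le> B)"
  show "limit_scheme nt nx Ht Qt Hx Qx nv v \<omega> \<sigma>s \<sigma>a \<rho>lim \<rho>0"
    using H part1[OF sig_s] by blast
next
  fix a :: "nat \<Rightarrow> nat \<Rightarrow> nat \<Rightarrow> real" and i e j :: nat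
  assume "\<forall>e<3. \<forall>s.
            epoly pt px a e s (xn nx) = epoly pt px a ((e + 1) mod 3) s (xn 0)
          \<and> deriv (epoly pt px a e s) (xn nx) = deriv (epoly pt px a ((e + 1) mod 3) s) (xn 0)"
    and "i \<le> nt" "e < 3" "j \<le> nx"
  then show "Dt_op nt Ht Qt (\<lambda>i' e' j'. epoly pt px a e' (tn i') (xn j')) i e j
            - Dx_tilde nx Hx Qx (\<lambda>i' e' j'. (\<Sum>k<nv. \<omega> k * v k ^ 2) / \<sigma>s
                 * Dx_tilde nx Hx Qx (\<lambda>i'' e'' j''. epoly pt px a e'' (tn i'') (xn j'')) i' e' j') i e j
            + \<sigma>a * epoly pt px a e (tn i) (xn j)
            + SAT Ht (\<lambda>i' e' j'. epoly pt px a e' (tn i') (xn j'))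
                     (\<lambda>e' j'. epoly pt px a e' (tn 0) (xn j')) i e j
          = deriv (\<lambda>s. epoly pt px a e s (xn j)) (tn i)
            - (\<Sum>k<nv. \<omega> k * v k ^ 2) / \<sigma>s
                 * deriv (deriv (epoly pt px a e (tn i))) (xn j)
            + \<sigma>a * epoly pt px a e (tn i) (xn j)"
    by (rule part2[OF sbp_t sbp_x])
next
  fix \<rho> :: grid and \<rho>0 :: svec
  assume ls: "limit_scheme nt nx Ht Qt Hx Qx nv v \<omega> \<sigma>s \<sigma>a \<rho> \<rho>0"
  have "0 \<le> (\<Sum>k<nv. \<omega> k * v k ^ 2)"
    using w_pos by (intro sum_nonneg) (simp add: less_imp_le)
  then have c: "0 \<le> (\<Sum>k<nv. \<omega> k * v k ^ 2) / \<sigma>s" using sig_s by simp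
  show "senergy nx Hx (\<rho> nt) \<le> senergy nx Hx \<rho>0"
    by (rule part3[OF sbp_t sbp_x c sig_a ls])
qed

end
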